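(* Let $N$ be a positive integer and $K$ a compact Hausdorff space. Then $\ell_\infty^N$ can be U-embedded into $C(K)$ if and only if $K$ contains at least $N$ distinct $G_\delta$-points (points $p$ such that $\{p\}$ is a $G_\delta$-subset of $K$).
   Context: $\ell_\infty^N$ is $\mathbb R^N$ with the max norm; $C(K)$ carries the sup norm. A linear isometry $T\colon X\to Y$ is a U-embedding if every $x^*\in X^*$ has a unique $y^*\in Y^*$ with $T^*(y^* )=x^*$ and $\|y^*\|=\|x^*\|$. *)

theory Defs
  imports "HOL-Analysis.Analysis"
begin

text \<open>C(K) for a topological space K = topspace X: continuous real functions,
  represented extensionally (zero outside topspace X).\<close>
definition CK :: "'a topology \<Rightarrow> ('a \<Rightarrow> real) set" where
  "CK X = {f. continuous_map X euclideanreal f \<and> (\<forall>x. x \<notin> topspace X \<longrightarrow> f x = 0)}"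

text \<open>Sup norm on C(K) (0 if K is empty).\<close>
definition supn :: "'a topology \<Rightarrow> ('a \<Rightarrow> real) \<Rightarrow> real" where
  "supn X f = Sup (insert 0 ((\<lambda>x. \<bar>f x\<bar>) ` topspace X))"

definition CK_dual :: "'a topology \<Rightarrow> (('a \<Rightarrow> real) \<Rightarrow> real) \<Rightarrow> bool" where
  "CK_dual X \<phi> \<longleftrightarrow>
     (\<forall>f\<in>CK X. \<forall>g\<in>CK X. \<phi> (\<lambda>x. f x + g x) = \<phi> f + \<phi> g) \<and>
     (\<forall>c. \<forall>f\<in>CK X. \<phi> (\<lambda>x. c * f x) = c * \<phi> f) \<and>
     (\<exists>B. \<forall>f\<in>CK X. \<bar>\<phi> f\<bar> \<le> B * supn X f)"

definition CK_dual_norm :: "'a topology \<Rightarrow> (('a \<Rightarrow> real) \<Rightarrow> real) \<Rightarrow> real" where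
  "CK_dual_norm X \<phi> = Sup {\<bar>\<phi> f\<bar> | f. f \<in> CK X \<and> supn X f \<le> 1}"

definition linf_dual_norm :: "(real^'n \<Rightarrow> real) \<Rightarrow> real" where
  "linf_dual_norm g = Sup {\<bar>g x\<bar> | x. infnorm x \<le> 1}"

definition linf_CK_isometry :: "'a topology \<Rightarrow> (real^'n \<Rightarrow> ('a \<Rightarrow> real)) \<Rightarrow> bool" where
  "linf_CK_isometry X T \<longleftrightarrow>
     (\<forall>x y. T (x + y) = (\<lambda>t. T x t + T y t)) \<and> (\<forall>c x. T (c *\<^sub>R x) = (\<lambda>t. c * T x t)) \<and> (\<forall>x. T x \<in> CK X) \<and> (\<forall>x. supn X (T x) = infnorm x)"

text \<open>U-embedding: every functional on l_infinity^N has a unique norm-preserving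
  extension through T^* (uniqueness as elements of C(K)*, i.e. on C(K)).\<close>
definition U_embedding :: "'a topology \<Rightarrow> (real^'n \<Rightarrow> ('a \<Rightarrow> real)) \<Rightarrow> bool" where
  "U_embedding X T \<longleftrightarrow> linf_CK_isometry X T \<and>
     (\<forall>g::real^'n \<Rightarrow> real. linear g \<longrightarrow>
        (\<exists>\<phi>. CK_dual X \<phi> \<and> (\<forall>x. \<phi> (T x) = g x) \<and> CK_dual_norm X \<phi> = linf_dual_norm g \<and>
           (\<forall>\<psi>. CK_dual X \<psi> \<and> (\<forall>x. \<psi> (T x) = g x) \<and> CK_dual_norm X \<psi> = linf_dual_norm g
                 \<longrightarrow> (\<forall>f\<in>CK X. \<psi> f = \<phi> f))))"

definition gdelta_points :: "'a topology \<Rightarrow> 'a set" where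
  "gdelta_points X = {p \<in> topspace X. gdelta_in X {p}}"

end

theory Submission
  imports Defs
begin


lemma CK_cont: "f \<in> CK X \<Longrightarrow> continuous_map X euclideanreal f"
  by (simp add: CK_def)

lemma CK_out: "f \<in> CK X \<Longrightarrow> x \<notin> topspace X \<Longrightarrow> f x = 0"
  by (simp add: CK_def)

lemma CK_restrict: "continuous_map X euclideanreal f \<Longrightarrow> (\<lambda>x. if x \<in> topspace X then f x else 0) \<in> CK X"
  unfolding CK_def by (auto intro: continuous_map_eq)

lemma CK_I: "continuous_map X euclideanreal f \<Longrightarrow> (\<And>x. x \<notin> topspace X \<Longrightarrow> f x = 0) \<Longrightarrow> f \<in> CK X"
  by (simp add: CK_def)

lemma CK_add: "f \<in> CK X \<Longrightarrow> g \<in> CK X \<Longrightarrow> (\<lambda>x. f x + g x) \<in> CK X"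
  by (auto simp: CK_def intro: continuous_map_add)

lemma CK_diff: "f \<in> CK X \<Longrightarrow> g \<in> CK X \<Longrightarrow> (\<lambda>x. f x - g x) \<in> CK X"
  by (auto simp: CK_def intro: continuous_map_diff)

lemma CK_cmul: "f \<in> CK X \<Longrightarrow> (\<lambda>x. c * f x) \<in> CK X"
  by (auto simp: CK_def intro: continuous_map_real_mult_left)

lemma CK_zero: "(\<lambda>x. 0) \<in> CK X"
  by (auto simp: CK_def)

lemma CK_bdd:
  assumes "compact_space X" "f \<in> CK X"
  shows "bdd_above ((\<lambda>x. \<bar>f x\<bar>) ` topspace X)"
proof -
  have "continuous_map X euclideanreal (\<lambda>x. \<bar>f x\<bar>)"
    using assms(2) by (simp add: CK_def continuous_map_real_abs)
  then have "compactin euclideanreal ((\<lambda>x. \<bar>f x\<bar>) ` topspace X)"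
    using assms(1) image_compactin compact_space_def by blast
  then have "compact ((\<lambda>x. \<bar>f x\<bar>) ` topspace X)" by simp
  then show ?thesis by (simp add: bounded_imp_bdd_above compact_imp_bounded)
qed

lemma supn_ge: 
  assumes "compact_space X" "f \<in> CK X" "x \<in> topspace X"
  shows "\<bar>f x\<bar> \<le> supn X f"
  unfolding supn_def
  by (rule cSup_upper) (use CK_bdd[OF assms(1,2)] assms(3) in auto)

lemma supn_nonneg: "compact_space X \<Longrightarrow> f \<in> CK X \<Longrightarrow> 0 \<le> supn X f"
  unfolding supn_def
  by (rule cSup_upper) (use CK_bdd in auto)

lemma supn_le:
  assumes "0 \<le> c" "\<And>x. x \<in> topspace X \<Longrightarrow> \<bar>f x\<bar> \<le> c"
  shows "supn X f \<le> c"
  unfolding supn_def by (rule cSup_least) (use assms in auto)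

lemma supn_zero_imp:
  assumes "compact_space X" "f \<in> CK X" "supn X f = 0"
  shows "f = (\<lambda>x. 0)"
proof
  fix x show "f x = 0"
  proof (cases "x \<in> topspace X")
    case True then show ?thesis using supn_ge[OF assms(1,2) True] assms(3) by simp
  next
    case False then show ?thesis using assms(2) by (simp add: CK_def)
  qed
qed

lemma CK_dual_add: "CK_dual X \<phi> \<Longrightarrow> f \<in> CK X \<Longrightarrow> g \<in> CK X \<Longrightarrow> \<phi> (\<lambda>x. f x + g x) = \<phi> f + \<phi> g"
  by (simp add: CK_dual_def)

lemma CK_dual_cmul: "CK_dual X \<phi> \<Longrightarrow> f \<in> CK X \<Longrightarrow> \<phi> (\<lambda>x. c * f x) = c * \<phi> f"
  by (simp add: CK_dual_def)

lemma CK_dual_zero: 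
  assumes "CK_dual X \<phi>" shows "\<phi> (\<lambda>x. 0) = 0"
proof -
  have "\<phi> (\<lambda>x. 0 * (0::real)) = 0 * \<phi> (\<lambda>x. 0)" using CK_dual_cmul[OF assms CK_zero] .
  then show ?thesis by simp
qed

lemma CK_dual_diff: 
  assumes "CK_dual X \<phi>" "f \<in> CK X" "g \<in> CK X"
  shows "\<phi> (\<lambda>x. f x - g x) = \<phi> f - \<phi> g"
proof -
  have e: "(\<lambda>x. f x - g x) = (\<lambda>x. f x + (-1) * g x)" by simp
  have "\<phi> (\<lambda>x. f x + (-1) * g x) = \<phi> f + \<phi> (\<lambda>x. (-1) * g x)"
    using assms CK_dual_add[OF assms(1,2) CK_cmul[OF assms(3)]] by blast
  also have "\<dots> = \<phi> f - \<phi> g" using CK_dual_cmul[OF assms(1,3), of "-1"] by simp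
  finally show ?thesis unfolding e .
qed

lemma CK_dual_bdd:
  assumes "CK_dual X \<phi>" and cpt: "compact_space X"
  shows "bdd_above {\<bar>\<phi> f\<bar> | f. f \<in> CK X \<and> supn X f \<le> 1}"
proof -
  obtain B where B: "\<forall>f\<in>CK X. \<bar>\<phi> f\<bar> \<le> B * supn X f" using assms CK_dual_def by blast
  have "\<bar>\<phi> f\<bar> \<le> max B 0" if "f \<in> CK X" "supn X f \<le> 1" for f
  proof -
    have "\<bar>\<phi> f\<bar> \<le> B * supn X f" using B that by blast
    also have "\<dots> \<le> max B 0 * supn X f" 
      by (rule mult_right_mono[OF max.cobounded1 supn_nonneg[OF cpt that(1)]])
    also have "\<dots> \<le> max B 0" 
      using that by (simp add: mult_left_le)
    finally show ?thesis .
  qed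
  then show ?thesis by (auto intro!: bdd_aboveI)
qed

lemma CK_dual_norm_ge:
  assumes "CK_dual X \<phi>" "f \<in> CK X" "supn X f \<le> 1" "compact_space X"
  shows "\<bar>\<phi> f\<bar> \<le> CK_dual_norm X \<phi>"
  unfolding CK_dual_norm_def by (rule cSup_upper) (use assms CK_dual_bdd in auto)

lemma CK_dual_norm_le:
  assumes "\<And>f. f \<in> CK X \<Longrightarrow> supn X f \<le> 1 \<Longrightarrow> \<bar>\<phi> f\<bar> \<le> c"
  shows "CK_dual_norm X \<phi> \<le> c"
proof -
  have "supn X (\<lambda>x. 0) \<le> 1" by (rule supn_le) auto
  then show ?thesis
  unfolding CK_dual_norm_def by (intro cSup_least) (use assms CK_zero in auto)
qed

lemma CK_dual_norm_bound:
  assumes "compact_space X" "CK_dual X \<phi>" "f \<in> CK X"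
  shows "\<bar>\<phi> f\<bar> \<le> CK_dual_norm X \<phi> * supn X f"
proof (cases "supn X f = 0")
  case True
  then have "f = (\<lambda>x. 0)" using supn_zero_imp assms by blast
  then show ?thesis using CK_dual_zero[OF assms(2)] True by simp
next
  case False
  define s where "s = supn X f"
  have s: "s > 0" using False supn_nonneg[OF assms(1,3)] s_def by simp
  define g where "g = (\<lambda>x. inverse s * f x)"
  have g: "g \<in> CK X" unfolding g_def using assms(3) CK_cmul by blast
  have "supn X g \<le> 1"
  proof (rule supn_le)
    fix x assume "x \<in> topspace X"
    then have "\<bar>f x\<bar> \<le> s" unfolding s_def by (rule supn_ge[OF assms(1,3)])
    then have "inverse s * \<bar>f x\<bar> \<le> inverse s * s" by (rule mult_left_mono) (use s in simp)
    then show "\<bar>g x\<bar> \<le> 1" using s by (simp add: g_def abs_mult)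
  qed simp
  then have "\<bar>\<phi> g\<bar> \<le> CK_dual_norm X \<phi>" using CK_dual_norm_ge assms(1,2) g by blast
  moreover have "f = (\<lambda>x. s * g x)" 
  proof
    fix x have "s \<noteq> 0" using s by simp
    then show "f x = s * g x" by (simp add: g_def mult.assoc[symmetric])
  qed
  then have "\<phi> f = s * \<phi> g" using CK_dual_cmul[OF assms(2) g] by simp
  ultimately show ?thesis using s by (simp add: abs_mult s_def[symmetric] mult.commute)
qed



lemma lin_expand:
  fixes g :: "real^'n \<Rightarrow> real"
  assumes "linear g"
  shows "g x = (\<Sum>i\<in>UNIV. x$i * g (axis i 1))"
proof -
  have "x = (\<Sum>i\<in>UNIV. x$i *\<^sub>R axis i 1)" using basis_expansion[of x] by (simp add: scalar_mult_eq_scaleR)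
  then have "g x = g (\<Sum>i\<in>UNIV. x$i *\<^sub>R axis i 1)" by simp
  also have "\<dots> = (\<Sum>i\<in>UNIV. x$i * g (axis i 1))"
    using assms by (simp add: linear_sum linear_scale)
  finally show ?thesis .
qed

lemma mul_sgn: "(x::real) * sgn x = \<bar>x\<bar>" "sgn x * (x::real) = \<bar>x\<bar>"
  by (simp_all add: sgn_if abs_if)

lemma infnorm_le_cart:
  assumes "\<And>i. \<bar>(x::real^'n)$i\<bar> \<le> c"
  shows "infnorm x \<le> c"
  unfolding infnorm_cart by (rule cSup_least) (use assms in auto)

lemma infnorm_attained_cart:
  "\<exists>k. infnorm (x::real^'n) = \<bar>x$k\<bar>"
proof -
  have "{\<bar>x$i\<bar> |i. i\<in>UNIV} = range (\<lambda>i. \<bar>x$i\<bar>)" by auto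
  then have fin: "finite {\<bar>x$i\<bar> |i. i\<in>UNIV}" by simp
  have ne: "{\<bar>x$i\<bar> |i. i\<in>UNIV} \<noteq> {}" by blast
  have "infnorm x \<in> {\<bar>x$i\<bar> |i. i\<in>UNIV}"
    unfolding infnorm_cart using cSup_eq_Max[OF fin ne] Max_in[OF fin ne] by simp
  then show ?thesis by auto
qed

lemma linf_dual_norm_eq:
  fixes g :: "real^'n \<Rightarrow> real"
  assumes "linear g"
  shows "linf_dual_norm g = (\<Sum>i\<in>UNIV. \<bar>g (axis i 1)\<bar>)"
proof -
  let ?A = "\<Sum>i\<in>UNIV. \<bar>g (axis i 1)\<bar>"
  have bnd: "\<bar>g x\<bar> \<le> ?A" if "infnorm x \<le> 1" for x
  proof -
    have "\<bar>g x\<bar> = \<bar>\<Sum>i\<in>UNIV. x$i * g (axis i 1)\<bar>" using lin_expand[OF assms, of x] by (simp only:)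
    also have "\<dots> \<le> (\<Sum>i\<in>UNIV. \<bar>x$i * g (axis i 1)\<bar>)" by (rule sum_abs)
    also have "\<dots> \<le> ?A"
    proof (rule sum_mono)
      fix i 
      have "\<bar>x$i\<bar> \<le> 1" using component_le_infnorm_cart[of x i] that by simp
      then show "\<bar>x$i * g (axis i 1)\<bar> \<le> \<bar>g (axis i 1)\<bar>"
        by (simp add: abs_mult mult_left_le_one_le)
    qed
    finally show ?thesis .
  qed
  define y where "y = (\<chi> i. sgn (g (axis i 1)))"
  have y1: "infnorm y \<le> 1" 
    by (rule infnorm_le_cart) (simp add: y_def abs_sgn_eq)
  have gy: "g y = ?A" 
    unfolding lin_expand[OF assms, of y] by (simp add: y_def mul_sgn)
  have bdd: "bdd_above {\<bar>g x\<bar> | x. infnorm x \<le> 1}" using bnd by (auto intro!: bdd_aboveI)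
  show ?thesis
    unfolding linf_dual_norm_def
  proof (rule antisym)
    show "Sup {\<bar>g x\<bar> | x. infnorm x \<le> 1} \<le> ?A"
      by (rule cSup_least) (use bnd y1 in auto)
    have "\<bar>g y\<bar> \<le> Sup {\<bar>g x\<bar> | x. infnorm x \<le> 1}"
      by (rule cSup_upper) (use y1 bdd in auto)
    then show "?A \<le> Sup {\<bar>g x\<bar> | x. infnorm x \<le> 1}" using gy by simp
  qed
qed



lemma sep_fun:
  assumes "compact_space X" "Hausdorff_space X" "t \<in> topspace X" "q \<in> topspace X" "t \<noteq> q"
  shows "\<exists>f\<in>CK X. f t = 1 \<and> f q = 0"
proof -
  have N: "normal_space X" using assms compact_Hausdorff_or_regular_imp_normal_space by blast
  obtain f where f: "continuous_map X (top_of_set {0..1::real}) f" "f ` {q} \<subseteq> {0}" "f ` {t} \<subseteq> {1}"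
    using Urysohn_lemma[OF N closedin_Hausdorff_singleton[OF assms(2,4)] closedin_Hausdorff_singleton[OF assms(2,3)], of 0 1]
      assms(5) by auto
  have "continuous_map X euclideanreal f" using f(1) continuous_map_in_subtopology by blast
  then have "(\<lambda>x. if x \<in> topspace X then f x else 0) \<in> CK X" by (rule CK_restrict)
  then show ?thesis using f assms(3,4) by (intro bexI[of _ "\<lambda>x. if x \<in> topspace X then f x else 0"]) auto
qed

lemma one_CK: "(\<lambda>x. if x \<in> topspace X then 1 else 0) \<in> CK X"
  using CK_restrict[of X "\<lambda>x. 1"] by simp

lemma infnorm_axis1: "infnorm (axis i (1::real) :: real^'n) = 1"
proof -
  obtain k where k: "infnorm (axis i (1::real) :: real^'n) = \<bar>axis i 1 $ k\<bar>" using infnorm_attained_cart by blast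
  have "\<bar>(axis i (1::real) :: real^'n) $ i\<bar> \<le> infnorm (axis i (1::real) :: real^'n)" by (rule component_le_infnorm_cart)
  moreover have "\<bar>(axis i (1::real) :: real^'n) $ k\<bar> \<le> 1" by (simp add: axis_def)
  ultimately show ?thesis using k by simp
qed

lemma attains_abs_max:
  assumes "compact_space X" "continuous_map X euclideanreal h" "topspace X \<noteq> {}"
  shows "\<exists>t\<in>topspace X. \<forall>y\<in>topspace X. \<bar>h y\<bar> \<le> \<bar>h t\<bar>"
proof -
  have "continuous_map X euclideanreal (\<lambda>x. \<bar>h x\<bar>)"
    using assms(2) by (simp add: continuous_map_real_abs)
  then have "compactin euclideanreal ((\<lambda>x. \<bar>h x\<bar>) ` topspace X)"
    using assms(1) image_compactin compact_space_def by blast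
  then have c: "compact ((\<lambda>x. \<bar>h x\<bar>) ` topspace X)" by simp
  obtain m where "m \<in> (\<lambda>x. \<bar>h x\<bar>) ` topspace X" "\<forall>z\<in>(\<lambda>x. \<bar>h x\<bar>) ` topspace X. z \<le> m"
    using compact_attains_sup[OF c] assms(3) by blast
  then show ?thesis by auto
qed

lemma fwd:
  fixes X :: "'a topology" and T :: "real^'n \<Rightarrow> ('a \<Rightarrow> real)"
  assumes cpt: "compact_space X" and hd: "Hausdorff_space X" and U: "U_embedding X T"
  shows "\<exists>S. S \<subseteq> gdelta_points X \<and> finite S \<and> card S = CARD('n)"
proof -
  have iso: "linf_CK_isometry X T" using U U_embedding_def by blast
  have Tadd: "\<And>x y. T (x + y) = (\<lambda>t. T x t + T y t)" 
    and Tsc: "\<And>c x. T (c *\<^sub>R x) = (\<lambda>t. c * T x t)"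
    and TCK: "\<And>x. T x \<in> CK X" and Tn: "\<And>x. supn X (T x) = infnorm x"
    using iso unfolding linf_CK_isometry_def by auto
  have Tlin: "linear (\<lambda>x. T x t)" for t
    by (rule linearI) (simp_all add: Tadd Tsc)
  have Texp: "T x t = (\<Sum>j\<in>UNIV. x$j * T (axis j 1) t)" for x t
    by (rule lin_expand[OF Tlin[of t]])
  have Bsum: "(\<Sum>j\<in>UNIV. \<bar>T (axis j 1) t\<bar>) \<le> 1" if t: "t \<in> topspace X" for t
  proof -
    define y :: "real^'n" where "y = (\<chi> j. sgn (T (axis j 1) t))"
    have "infnorm y \<le> 1" by (rule infnorm_le_cart) (simp add: y_def abs_sgn_eq)
    moreover have "T y t = (\<Sum>j\<in>UNIV. \<bar>T (axis j 1) t\<bar>)"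
      using Texp[of y t] by (simp add: y_def mul_sgn)
    moreover have "\<bar>T y t\<bar> \<le> supn X (T y)" using supn_ge[OF cpt TCK t] .
    ultimately show ?thesis using Tn[of y] by simp
  qed
  have hbnd: "\<bar>T (axis i 1) t\<bar> \<le> 1" if "t \<in> topspace X" for i t
  proof -
    have "\<bar>T (axis i 1) t\<bar> \<le> supn X (T (axis i 1))" by (rule supn_ge[OF cpt TCK that])
    also have "\<dots> = infnorm (axis i 1 :: real^'n)" by (rule Tn)
    also have "\<dots> = 1" by (rule infnorm_axis1)
    finally show ?thesis .
  qed
  have ax1: "supn X (T (axis i 1)) = 1" for i
    unfolding Tn by (rule infnorm_axis1)
  have others0: "T (axis j 1) t = 0" if t: "t \<in> topspace X" and i: "\<bar>T (axis i 1) t\<bar> = 1" and ji: "j \<noteq> i" for i j t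
  proof -
    have "(\<Sum>k\<in>{i,j}. \<bar>T (axis k 1) t\<bar>) \<le> (\<Sum>k\<in>UNIV. \<bar>T (axis k 1) t\<bar>)"
      by (rule sum_mono2) auto
    then show ?thesis using Bsum[OF t] i ji by simp
  qed
  have ne: "topspace X \<noteq> {}"
  proof
    assume "topspace X = {}"
    then have "supn X (T (axis undefined 1)) = 0" by (simp add: supn_def)
    then show False using ax1 by simp
  qed
  have ex1: "\<exists>t\<in>topspace X. \<bar>T (axis i 1) t\<bar> = 1" for i
  proof -
    obtain t where t: "t \<in> topspace X" "\<forall>y\<in>topspace X. \<bar>T (axis i 1) y\<bar> \<le> \<bar>T (axis i 1) t\<bar>"
      using attains_abs_max[OF cpt CK_cont[OF TCK] ne] by blast
    have "supn X (T (axis i 1)) \<le> \<bar>T (axis i 1) t\<bar>" by (rule supn_le) (use t in auto)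
    then have "1 \<le> \<bar>T (axis i 1) t\<bar>" using ax1 by simp
    then have "\<bar>T (axis i 1) t\<bar> = 1" using hbnd[OF t(1), of i] by linarith
    then show ?thesis using t(1) by blast
  qed
  define p where "p i = (SOME t. t \<in> topspace X \<and> \<bar>T (axis i 1) t\<bar> = 1)" for i
  have p: "p i \<in> topspace X \<and> \<bar>T (axis i 1) (p i)\<bar> = 1" for i
    unfolding p_def using someI_ex[OF ex1[of i, unfolded Bex_def]] .
  have delta: "CK_dual X (\<lambda>f. T (axis i 1) t * f t) \<and> (\<forall>x. T (axis i 1) t * T x t = x$i)
        \<and> CK_dual_norm X (\<lambda>f. T (axis i 1) t * f t) = 1"
    if t: "t \<in> topspace X" and h1: "\<bar>T (axis i 1) t\<bar> = 1" for i t
  proof (intro conjI)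
    let ?s = "T (axis i 1) t"
    show "CK_dual X (\<lambda>f. ?s * f t)"
      unfolding CK_dual_def
    proof (intro conjI ballI allI)
      show "\<exists>B. \<forall>f\<in>CK X. \<bar>?s * f t\<bar> \<le> B * supn X f"
        using supn_ge[OF cpt _ t] h1 by (intro exI[of _ 1]) (simp add: abs_mult)
    qed (simp_all add: algebra_simps)
    show "\<forall>x. ?s * T x t = x$i"
    proof
      fix x
      have "T x t = (\<Sum>j\<in>UNIV. x$j * T (axis j 1) t)" by (rule Texp)
      also have "\<dots> = x$i * ?s"
        by (subst sum.remove[of _ i]) (auto simp: others0[OF t h1])
      finally show "?s * T x t = x$i" using h1 by (simp add: abs_if split: if_splits)
    qed
    show "CK_dual_norm X (\<lambda>f. ?s * f t) = 1"
    proof (rule antisym)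
      show "CK_dual_norm X (\<lambda>f. ?s * f t) \<le> 1"
      proof (rule CK_dual_norm_le)
        fix f assume f: "f \<in> CK X" "supn X f \<le> 1"
        have "\<bar>f t\<bar> \<le> 1" using supn_ge[OF cpt f(1) t] f(2) by linarith
        then show "\<bar>?s * f t\<bar> \<le> 1" using h1 by (simp add: abs_mult)
      qed
      have "supn X (\<lambda>x. if x \<in> topspace X then 1 else 0) \<le> 1" by (rule supn_le) auto
      from CK_dual_norm_ge[OF \<open>CK_dual X (\<lambda>f. ?s * f t)\<close> one_CK this cpt]
      show "1 \<le> CK_dual_norm X (\<lambda>f. ?s * f t)" using h1 t by simp
    qed
  qed
  have lin_i: "linear (\<lambda>x::real^'n. x$i)" for i by (rule linearI) auto
  have ldn: "linf_dual_norm (\<lambda>x::real^'n. x$i) = 1" for i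
  proof -
    have "linf_dual_norm (\<lambda>x::real^'n. x$i) = (\<Sum>j\<in>UNIV. \<bar>(axis j 1 :: real^'n) $ i\<bar>)"
      using linf_dual_norm_eq[OF lin_i] by simp
    also have "\<dots> = (\<Sum>j\<in>UNIV. if j = i then 1 else 0)" by (intro sum.cong) (auto simp: axis_def)
    finally show ?thesis by simp
  qed
  have uniq: "t = p i" if t: "t \<in> topspace X" and h1: "\<bar>T (axis i 1) t\<bar> = 1" for i t
  proof (rule ccontr)
    assume tp: "t \<noteq> p i"
    obtain \<phi> where \<phi>: "\<forall>\<psi>. CK_dual X \<psi> \<and> (\<forall>x. \<psi> (T x) = x$i) \<and> CK_dual_norm X \<psi> = linf_dual_norm (\<lambda>x::real^'n. x$i)
                 \<longrightarrow> (\<forall>f\<in>CK X. \<psi> f = \<phi> f)"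
      using U lin_i[of i] unfolding U_embedding_def by blast
    have e1: "\<forall>f\<in>CK X. T (axis i 1) t * f t = \<phi> f"
      using \<phi>[rule_format, of "\<lambda>f. T (axis i 1) t * f t"] delta[OF t h1] ldn by auto
    have e2: "\<forall>f\<in>CK X. T (axis i 1) (p i) * f (p i) = \<phi> f"
      using \<phi>[rule_format, of "\<lambda>f. T (axis i 1) (p i) * f (p i)"] delta[of "p i" i] p[of i] ldn by auto
    obtain f where f: "f \<in> CK X" "f t = 1" "f (p i) = 0" using sep_fun[OF cpt hd t _ tp] p by blast
    show False using e1 e2 f h1 by force
  qed
  have single: "{p i} = (\<Inter>n. {x \<in> topspace X. \<bar>T (axis i 1) x\<bar> \<in> {1 - inverse (real (Suc n))<..}})" for i
  proof (rule set_eqI, rule iffI)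
    fix x assume "x \<in> {p i}"
    then show "x \<in> (\<Inter>n. {x \<in> topspace X. \<bar>T (axis i 1) x\<bar> \<in> {1 - inverse (real (Suc n))<..}})"
      using p[of i] by auto
  next
    fix x assume x: "x \<in> (\<Inter>n. {x \<in> topspace X. \<bar>T (axis i 1) x\<bar> \<in> {1 - inverse (real (Suc n))<..}})"
    then have xt: "x \<in> topspace X" by auto
    have "\<bar>T (axis i 1) x\<bar> = 1"
    proof (rule ccontr)
      assume "\<bar>T (axis i 1) x\<bar> \<noteq> 1"
      then have lt: "\<bar>T (axis i 1) x\<bar> < 1" using hbnd[OF xt, of i] by simp
      obtain n where n: "inverse (real (Suc n)) < 1 - \<bar>T (axis i 1) x\<bar>"
        using reals_Archimedean[of "1 - \<bar>T (axis i 1) x\<bar>"] lt by auto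
      have "\<bar>T (axis i 1) x\<bar> > 1 - inverse (real (Suc n))" using x by auto
      then show False using n by simp
    qed
    then show "x \<in> {p i}" using uniq[OF xt] by simp
  qed
  have gd: "gdelta_in X {p i}" for i
  proof -
    have cont: "continuous_map X euclideanreal (\<lambda>x. \<bar>T (axis i 1) x\<bar>)"
      using CK_cont[OF TCK] by (simp add: continuous_map_real_abs)
    have op: "openin X {x \<in> topspace X. \<bar>T (axis i 1) x\<bar> \<in> {c<..}}" for c
      by (rule openin_continuous_map_preimage[OF cont]) simp
    show ?thesis
      unfolding single
    proof (rule gdelta_in_Inter)
      fix S assume "S \<in> range (\<lambda>n. {x \<in> topspace X. \<bar>T (axis i 1) x\<bar> \<in> {1 - inverse (real (Suc n))<..}})"
      then show "gdelta_in X S" using op open_imp_gdelta_in by blast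
    qed auto
  qed
  have injp: "inj p"
  proof (rule injI)
    fix i j assume pij: "p i = p j"
    show "i = j"
    proof (rule ccontr)
      assume "i \<noteq> j"
      then have "T (axis j 1) (p i) = 0" using others0[of "p i" i j] p[of i] by auto
      then show False using p[of j] pij by simp
    qed
  qed
  show ?thesis
  proof (intro exI conjI)
    show "range p \<subseteq> gdelta_points X" using p gd by (auto simp: gdelta_points_def)
    show "finite (range p)" by simp
    show "card (range p) = CARD('n)" using injp by (simp add: card_image)
  qed
qed



lemma geo_sum2: "summable (\<lambda>n. (1/2::real)^n) \<and> (\<Sum>n. (1/2::real)^n) = 2"
  using summable_geometric[of "1/2::real"] suminf_geometric[of "1/2::real"] by simp

lemma wsum_term1:
  fixes x :: real
  assumes "0 \<le> x" "x \<le> 1"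
  shows "0 \<le> (1/2)^n * x \<and> (1/2::real)^n * x \<le> (1/2)^n"
proof -
  have "(1/2::real)^n * x \<le> (1/2)^n * 1" by (rule mult_left_mono) (use assms in auto)
  then show ?thesis using assms(1) by simp
qed

lemma wsum_basic:
  fixes a :: "nat \<Rightarrow> real"
  assumes "\<And>n. 0 \<le> a n" "\<And>n. a n \<le> 1"
  shows "summable (\<lambda>n. (1/2)^n * a n) \<and> 0 \<le> (\<Sum>n. (1/2)^n * a n) \<and> (\<Sum>n. (1/2)^n * a n) \<le> 2"
proof -
  have t: "0 \<le> (1/2)^n * a n \<and> (1/2::real)^n * a n \<le> (1/2)^n" for n using wsum_term1[OF assms(1,2)] .
  have s: "summable (\<lambda>n. (1/2::real)^n * a n)"
  proof (rule summable_comparison_test'[OF geo_sum2[THEN conjunct1], of 0])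
    fix n show "norm ((1/2::real)^n * a n) \<le> (1/2)^n" using t[of n] by simp
  qed
  have "(\<Sum>n. (1/2)^n * a n) \<le> (\<Sum>n. (1/2::real)^n)"
    by (rule suminf_le[OF _ s geo_sum2[THEN conjunct1]]) (use t in blast)
  moreover have "0 \<le> (\<Sum>n. (1/2)^n * a n)" by (rule suminf_nonneg[OF s]) (use t in blast)
  ultimately show ?thesis using s geo_sum2 by simp
qed

lemma wsum_strict:
  fixes a :: "nat \<Rightarrow> real"
  assumes "\<And>n. 0 \<le> a n" "\<And>n. a n \<le> 1" "a k < 1"
  shows "(\<Sum>n. (1/2)^n * a n) < 2"
proof -
  have s: "summable (\<lambda>n. (1/2::real)^n * a n)" using wsum_basic assms by blast
  have "0 < (\<Sum>n. (1/2::real)^n - (1/2)^n * a n)"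
  proof (rule suminf_pos2[of _ k])
    show "summable (\<lambda>n. (1/2::real)^n - (1/2)^n * a n)"
      by (rule summable_diff[OF geo_sum2[THEN conjunct1] s])
    fix n show "0 \<le> (1/2::real)^n - (1/2)^n * a n" using wsum_term1[OF assms(1,2), of n n] by simp
  next
    have "(1/2::real)^k * a k < (1/2)^k * 1" by (rule mult_strict_left_mono) (use assms in auto)
    then show "0 < (1/2::real)^k - (1/2)^k * a k" by simp
  qed
  also have "\<dots> = 2 - (\<Sum>n. (1/2)^n * a n)"
    using suminf_diff[OF geo_sum2[THEN conjunct1] s] geo_sum2 by simp
  finally show ?thesis by simp
qed

lemma wsum_tail:
  fixes a :: "nat \<Rightarrow> real"
  assumes "\<And>n. 0 \<le> a n" "\<And>n. a n \<le> 1"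
  shows "\<bar>(\<Sum>n. (1/2)^n * a n) - (\<Sum>n<m. (1/2)^n * a n)\<bar> \<le> 2 * (1/2)^m"
proof -
  have s: "summable (\<lambda>n. (1/2::real)^n * a n)" using wsum_basic assms by blast
  have "(\<Sum>n. (1/2)^n * a n) - (\<Sum>n<m. (1/2)^n * a n) = (\<Sum>n. (1/2)^(n+m) * a (n+m))"
    using suminf_minus_initial_segment[OF s, of m] by simp
  also have "\<dots> = (\<Sum>n. (1/2)^m * ((1/2)^n * a (n+m)))"
    by (intro arg_cong[where f=suminf] ext) (simp only: power_add, algebra)
  also have "\<dots> = (1/2)^m * (\<Sum>n. (1/2)^n * a (n+m))"
    by (rule suminf_mult) (use wsum_basic[of "\<lambda>n. a (n+m)"] assms in auto)
  finally have e: "(\<Sum>n. (1/2)^n * a n) - (\<Sum>n<m. (1/2)^n * a n) = (1/2)^m * (\<Sum>n. (1/2)^n * a (n+m))" .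
  have b: "0 \<le> (\<Sum>n. (1/2::real)^n * a (n+m)) \<and> (\<Sum>n. (1/2::real)^n * a (n+m)) \<le> 2"
    using wsum_basic[of "\<lambda>n. a (n+m)"] assms by auto
  have le: "(1/2::real)^m * (\<Sum>n. (1/2::real)^n * a (n+m)) \<le> (1/2)^m * 2"
    using mult_left_mono[OF conjunct2[OF b], of "(1/2::real)^m"] by simp
  have nn: "0 \<le> (1/2::real)^m * (\<Sum>n. (1/2::real)^n * a (n+m))"
    using mult_nonneg_nonneg[OF _ conjunct1[OF b], of "(1/2::real)^m"] by simp
  have "\<bar>(1/2::real)^m * (\<Sum>n. (1/2::real)^n * a (n+m))\<bar> = (1/2::real)^m * (\<Sum>n. (1/2::real)^n * a (n+m))"
    by (rule abs_of_nonneg[OF nn])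
  also have "\<dots> \<le> 2 * (1/2)^m" using le by (simp only: mult.commute)
  finally show ?thesis unfolding e .
qed



lemma peak:
  assumes cpt: "compact_space X" and hd: "Hausdorff_space X" and pt: "p \<in> topspace X"
    and gd: "gdelta_in X {p}" and V: "openin X V" "p \<in> V"
  shows "\<exists>h. h \<in> CK X \<and> h p = 1 \<and> (\<forall>t. 0 \<le> h t \<and> h t \<le> 1) \<and> (\<forall>t\<in>topspace X. t \<noteq> p \<longrightarrow> h t < 1)
             \<and> (\<forall>t. t \<notin> V \<longrightarrow> h t = 0)"
proof -
  have N: "normal_space X" using cpt hd compact_Hausdorff_or_regular_imp_normal_space by blast
  obtain C where C0: "(\<forall>n. openin X (C n)) \<and> (\<forall>n. C(Suc n) \<subseteq> C n) \<and> \<Inter>(range C) = {p}"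
    using gdelta_in_descending[THEN iffD1, OF gd] by (rule exE)
  have C: "\<And>n. openin X (C n)" "\<Inter>(range C) = {p}" using C0 by auto
  have "\<exists>f. continuous_map X (top_of_set {0..1::real}) f \<and> f ` (topspace X - (C n \<inter> V)) \<subseteq> {0} \<and> f ` {p} \<subseteq> {1}" for n
  proof -
    have cl: "closedin X (topspace X - (C n \<inter> V))" using C(1) V(1) by blast
    have dj: "disjnt (topspace X - (C n \<inter> V)) {p}" using C(2) V(2) by auto
    obtain f where "continuous_map X (top_of_set {0..1::real}) f" "f ` (topspace X - (C n \<inter> V)) \<subseteq> {0}" "f ` {p} \<subseteq> {1}"
      using Urysohn_lemma[OF N cl closedin_Hausdorff_singleton[OF hd pt] dj, of 0 1] by auto
    then show ?thesis by blast
  qed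
  then have "\<forall>n. \<exists>f. continuous_map X (top_of_set {0..1::real}) f \<and> f ` (topspace X - (C n \<inter> V)) \<subseteq> {0} \<and> f ` {p} \<subseteq> {1}"
    by blast
  then obtain g where g0: "\<forall>n. continuous_map X (top_of_set {0..1::real}) (g n) \<and> g n ` (topspace X - (C n \<inter> V)) \<subseteq> {0} \<and> g n ` {p} \<subseteq> {1}"
    by (rule choice[THEN exE])
  have g: "\<And>n. continuous_map X (top_of_set {0..1::real}) (g n)"
    "\<And>n. g n ` (topspace X - (C n \<inter> V)) \<subseteq> {0}" "\<And>n. g n p = 1"
    using g0 by auto
  have gc: "continuous_map X euclideanreal (g n)" for n using g(1) continuous_map_in_subtopology by blast
  have g01: "0 \<le> g n x \<and> g n x \<le> 1" if "x \<in> topspace X" for n x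
    using g(1)[of n] that by (auto simp: continuous_map_def)
  define h0 where "h0 x = (\<Sum>n. (1/2)^n * g n x)" for x
  define h where "h x = (if x \<in> topspace X then h0 x / 2 else 0)" for x
  have h0c: "continuous_map X euclideanreal h0"
  proof -
    have "continuous_map X Met_TC.mtopology h0"
    proof (rule Met_TC.continuous_map_uniform_limit[where F=sequentially and f="\<lambda>m x. \<Sum>n<m. (1/2)^n * g n x"])
      show "\<forall>\<^sub>F m in sequentially. continuous_map X Met_TC.mtopology (\<lambda>x. \<Sum>n<m. (1/2)^n * g n x)"
      proof (rule always_eventually, rule allI)
        fix m
        show "continuous_map X Met_TC.mtopology (\<lambda>x. \<Sum>n<m. (1/2)^n * g n x)"
          unfolding mtopology_is_euclidean
          by (rule continuous_map_sum) (auto intro: continuous_map_real_mult_left gc)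
      qed
      fix \<epsilon> :: real assume e: "0 < \<epsilon>"
      have "((\<lambda>m. 2 * (1/2::real)^m) \<longlongrightarrow> 0) sequentially"
        using tendsto_mult_right_zero[OF LIMSEQ_power_zero[of "1/2::real"], of 2] by simp
      then have ev: "\<forall>\<^sub>F m in sequentially. 2 * (1/2::real)^m < \<epsilon>"
        using e order_tendstoD(2) by blast
      show "\<forall>\<^sub>F m in sequentially. \<forall>x\<in>topspace X. h0 x \<in> UNIV \<and> dist (\<Sum>n<m. (1/2)^n * g n x) (h0 x) < \<epsilon>"
        using ev
      proof (rule eventually_mono)
        fix m assume m: "2 * (1/2::real)^m < \<epsilon>"
        show "\<forall>x\<in>topspace X. h0 x \<in> UNIV \<and> dist (\<Sum>n<m. (1/2)^n * g n x) (h0 x) < \<epsilon>"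
        proof
          fix x assume "x \<in> topspace X"
          then have "\<bar>h0 x - (\<Sum>n<m. (1/2)^n * g n x)\<bar> \<le> 2 * (1/2)^m"
            unfolding h0_def using wsum_tail[of "\<lambda>n. g n x" m] g01 by blast
          then show "h0 x \<in> UNIV \<and> dist (\<Sum>n<m. (1/2)^n * g n x) (h0 x) < \<epsilon>"
            using m by (simp add: dist_real_def abs_minus_commute)
        qed
      qed
    qed simp
    then show ?thesis by simp
  qed
  have hCK: "h \<in> CK X"
  proof -
    have "continuous_map X euclideanreal (\<lambda>x. h0 x / 2)" 
      using continuous_map_real_mult_right[OF h0c, of "1/2"] by simp
    from CK_restrict[OF this] show ?thesis by (simp add: h_def[abs_def])
  qed
  have hp: "h p = 1"
    using pt geo_sum2 by (simp add: h_def h0_def g(3))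
  have h01: "0 \<le> h t \<and> h t \<le> 1" for t
    using wsum_basic[of "\<lambda>n. g n t"] g01 by (auto simp: h_def h0_def)
  have hlt: "h t < 1" if t: "t \<in> topspace X" "t \<noteq> p" for t
  proof -
    obtain n where n: "t \<notin> C n" using C(2) t by auto
    then have "g n t = 0" using g(2)[of n] t by auto
    then have "h0 t < 2" unfolding h0_def by (intro wsum_strict[of _ n]) (use g01 t in auto)
    then show ?thesis using t by (simp add: h_def)
  qed
  have hV: "h t = 0" if "t \<notin> V" for t
  proof (cases "t \<in> topspace X")
    case True
    then have "g n t = 0" for n using g(2)[of n] that by auto
    then show ?thesis by (simp add: h_def h0_def)
  qed (simp add: h_def)
  show ?thesis using hCK hp h01 hlt hV by blast
qed



definition Tmap :: "('n \<Rightarrow> 'a \<Rightarrow> real) \<Rightarrow> real^'n \<Rightarrow> 'a \<Rightarrow> real" where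
  "Tmap h x = (\<lambda>t. \<Sum>i\<in>UNIV. x$i * h i t)"

definition peak_sys :: "'a topology \<Rightarrow> ('n \<Rightarrow> 'a) \<Rightarrow> ('n \<Rightarrow> 'a \<Rightarrow> real) \<Rightarrow> bool" where
  "peak_sys X p h \<longleftrightarrow> (\<forall>i. h i \<in> CK X) \<and> (\<forall>i. h i (p i) = 1) \<and> (\<forall>i t. 0 \<le> h i t \<and> h i t \<le> 1)
     \<and> (\<forall>i. \<forall>t\<in>topspace X. t \<noteq> p i \<longrightarrow> h i t < 1) \<and> (\<forall>i j t. i \<noteq> j \<longrightarrow> h i t = 0 \<or> h j t = 0)
     \<and> (\<forall>i. p i \<in> topspace X)"

lemma Tval:
  fixes h :: "'n::finite \<Rightarrow> 'a \<Rightarrow> real"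
  assumes "peak_sys X p h"
  shows "\<exists>k. \<forall>x. Tmap h x t = x$k * h k t"
proof (cases "\<exists>k. h k t \<noteq> 0")
  case True
  then obtain k where k: "h k t \<noteq> 0" by blast
  have z: "h j t = 0" if "j \<noteq> k" for j using assms k that unfolding peak_sys_def by metis
  show ?thesis
  proof (intro exI allI)
    fix x :: "real^'n"
    have "Tmap h x t = x$k * h k t + (\<Sum>i\<in>UNIV-{k}. x$i * h i t)"
      unfolding Tmap_def by (subst sum.remove[of _ k]) auto
    also have "(\<Sum>i\<in>UNIV-{k}. x$i * h i t) = 0" by (rule sum.neutral) (auto simp: z)
    finally show "Tmap h x t = x$k * h k t" by simp
  qed
next
  case False
  then show ?thesis by (auto simp: Tmap_def)
qed

lemma T_at_p:
  fixes h :: "'n::finite \<Rightarrow> 'a \<Rightarrow> real"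
  assumes "peak_sys X p h"
  shows "Tmap h x (p i) = x$i"
proof -
  have z: "h j (p i) = 0" if "j \<noteq> i" for j using assms that unfolding peak_sys_def by (metis zero_neq_one)
  have "Tmap h x (p i) = x$i * h i (p i) + (\<Sum>j\<in>UNIV-{i}. x$j * h j (p i))"
    unfolding Tmap_def by (subst sum.remove[of _ i]) auto
  also have "(\<Sum>j\<in>UNIV-{i}. x$j * h j (p i)) = 0" by (rule sum.neutral) (auto simp: z)
  finally show ?thesis using assms unfolding peak_sys_def by simp
qed

lemma T_CK:
  fixes h :: "'n::finite \<Rightarrow> 'a \<Rightarrow> real"
  assumes "peak_sys X p h"
  shows "Tmap h x \<in> CK X"
proof (rule CK_I)
  have "h i \<in> CK X" for i using assms unfolding peak_sys_def by blast
  then have "\<And>i. continuous_map X euclideanreal (h i)" using CK_cont by metis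
  then show "continuous_map X euclideanreal (Tmap h x)"
    unfolding Tmap_def by (intro continuous_map_sum) (auto intro: continuous_map_real_mult_left)
next
  fix t assume "t \<notin> topspace X"
  have "h i \<in> CK X" for i using assms unfolding peak_sys_def by blast
  then have "h i t = 0" for i using CK_out \<open>t \<notin> topspace X\<close> by metis
  then show "Tmap h x t = 0" by (simp add: Tmap_def)
qed

lemma T_abs_le:
  fixes h :: "'n::finite \<Rightarrow> 'a \<Rightarrow> real"
  assumes "peak_sys X p h"
  shows "\<bar>Tmap h x t\<bar> \<le> infnorm x"
proof -
  obtain k where k: "\<forall>x. Tmap h x t = x$k * h k t" using Tval[OF assms] by blast
  have "\<bar>x$k * h k t\<bar> \<le> \<bar>x$k\<bar> * 1" unfolding abs_mult
    by (rule mult_left_mono) (use assms in \<open>auto simp: peak_sys_def\<close>)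
  then show ?thesis using k component_le_infnorm_cart[of x k] by simp
qed

lemma T_iso:
  fixes h :: "'n::finite \<Rightarrow> 'a \<Rightarrow> real"
  assumes cpt: "compact_space X" and ps: "peak_sys X p h"
  shows "linf_CK_isometry X (Tmap h)"
  unfolding linf_CK_isometry_def
proof (intro conjI allI)
  fix x y :: "real^'n"
  show "Tmap h (x + y) = (\<lambda>t. Tmap h x t + Tmap h y t)"
    by (simp add: Tmap_def sum.distrib distrib_right)
next
  fix c and x :: "real^'n"
  show "Tmap h (c *\<^sub>R x) = (\<lambda>t. c * Tmap h x t)"
    by (simp add: Tmap_def sum_distrib_left mult.assoc)
next
  fix x :: "real^'n"
  show "Tmap h x \<in> CK X" by (rule T_CK[OF ps])
  show "supn X (Tmap h x) = infnorm x"
  proof (rule antisym)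
    show "supn X (Tmap h x) \<le> infnorm x"
      by (rule supn_le) (auto intro: T_abs_le[OF ps] infnorm_pos_le)
    obtain k where k: "infnorm x = \<bar>x$k\<bar>" using infnorm_attained_cart by blast
    have pk: "p k \<in> topspace X" using ps unfolding peak_sys_def by blast
    have "\<bar>Tmap h x (p k)\<bar> \<le> supn X (Tmap h x)" by (rule supn_ge[OF cpt T_CK[OF ps] pk])
    then show "infnorm x \<le> supn X (Tmap h x)" using k T_at_p[OF ps] by simp
  qed
qed



lemma attains_abs_max_on:
  assumes "compactin X C" "continuous_map X euclideanreal u" "C \<noteq> {}"
  shows "\<exists>t\<in>C. \<forall>y\<in>C. \<bar>u y\<bar> \<le> \<bar>u t\<bar>"
proof -
  have "continuous_map X euclideanreal (\<lambda>x. \<bar>u x\<bar>)"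
    using assms(2) by (rule continuous_map_real_abs)
  then have "compactin euclideanreal ((\<lambda>x. \<bar>u x\<bar>) ` C)"
    using assms(1) image_compactin by blast
  then have c: "compact ((\<lambda>x. \<bar>u x\<bar>) ` C)" by simp
  obtain m where "m \<in> (\<lambda>x. \<bar>u x\<bar>) ` C" "\<forall>z\<in>(\<lambda>x. \<bar>u x\<bar>) ` C. z \<le> m"
    using compact_attains_sup[OF c] assms(3) by blast
  then show ?thesis by auto
qed

lemma small_eta:
  fixes h :: "'n::finite \<Rightarrow> 'a \<Rightarrow> real"
  assumes cpt: "compact_space X" and ps: "peak_sys X p h" and s1: "\<And>i. \<bar>s$i\<bar> \<le> 1"
    and f: "f \<in> CK X" and f0: "\<And>i. f (p i) = 0" and e: "\<epsilon> > 0"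
  shows "\<exists>\<eta>>0. \<forall>t\<in>topspace X. \<epsilon> \<le> \<bar>f t\<bar> \<longrightarrow> \<bar>Tmap h s t\<bar> \<le> 1 - \<eta>"
proof -
  let ?u = "Tmap h s"
  define C where "C = {t \<in> topspace X. \<bar>f t\<bar> \<in> {\<epsilon>..}}"
  have fc: "continuous_map X euclideanreal (\<lambda>t. \<bar>f t\<bar>)"
    using CK_cont[OF f] by (rule continuous_map_real_abs)
  have "closedin X C" unfolding C_def
    by (rule closedin_continuous_map_preimage[OF fc]) simp
  then have Cc: "compactin X C" using closedin_compact_space cpt by blast
  have ult: "\<bar>?u t\<bar> < 1" if t: "t \<in> topspace X" "\<And>i. t \<noteq> p i" for t
  proof -
    obtain k where k: "\<forall>x. Tmap h x t = x$k * h k t" using Tval[OF ps] by blast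
    have h0: "0 \<le> h k t" and hl: "h k t < 1" using ps t unfolding peak_sys_def by auto
    have "\<bar>s$k\<bar> * h k t \<le> 1 * h k t" by (rule mult_right_mono[OF s1 h0])
    then have "\<bar>s$k * h k t\<bar> \<le> 1 * h k t" using h0 by (simp add: abs_mult)
    then show ?thesis using k hl by simp
  qed
  show ?thesis
  proof (cases "C = {}")
    case True
    then show ?thesis by (intro exI[of _ 1]) (auto simp: C_def)
  next
    case False
    obtain t0 where t0: "t0 \<in> C" "\<forall>y\<in>C. \<bar>?u y\<bar> \<le> \<bar>?u t0\<bar>"
      using attains_abs_max_on[OF Cc T_CK[OF ps, THEN CK_cont] False] by blast
    have t0t: "t0 \<in> topspace X" and t0e: "\<epsilon> \<le> \<bar>f t0\<bar>" using t0(1) by (auto simp: C_def)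
    have "t0 \<noteq> p i" for i using t0e e f0[of i] by auto
    then have "\<bar>?u t0\<bar> < 1" using ult t0t by blast
    then show ?thesis using t0(2)
      by (intro exI[of _ "1 - \<bar>?u t0\<bar>"]) (auto simp: C_def)
  qed
qed

lemma kill:
  fixes h :: "'n::finite \<Rightarrow> 'a \<Rightarrow> real"
  assumes cpt: "compact_space X" and ps: "peak_sys X p h" and dual: "CK_dual X \<psi>"
    and s1: "\<And>i. \<bar>s$i\<bar> \<le> 1" and us: "\<psi> (Tmap h s) = CK_dual_norm X \<psi>"
    and f: "f \<in> CK X" and f0: "\<And>i. f (p i) = 0"
  shows "\<psi> f = 0"
proof -
  let ?u = "Tmap h s"
  define A where "A = CK_dual_norm X \<psi>"
  have "supn X (\<lambda>x. 0) \<le> 1" by (rule supn_le) auto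
  from CK_dual_norm_ge[OF dual CK_zero this cpt] have A0: "0 \<le> A" unfolding A_def by simp
  have uCK: "?u \<in> CK X" by (rule T_CK[OF ps])
  have sinf: "infnorm s \<le> 1" by (rule infnorm_le_cart) (rule s1)
  have ule: "\<bar>?u t\<bar> \<le> 1" for t using T_abs_le[OF ps, of s t] sinf by linarith
  define M where "M = supn X f"
  have M0: "0 \<le> M" unfolding M_def by (rule supn_nonneg[OF cpt f])
  have fM: "\<bar>f t\<bar> \<le> M" if "t \<in> topspace X" for t unfolding M_def by (rule supn_ge[OF cpt f that])
  have bound: "\<bar>\<psi> f\<bar> \<le> A * \<epsilon>" if e: "\<epsilon> > 0" for \<epsilon>
  proof -
    obtain \<eta> where \<eta>: "\<eta> > 0" "\<forall>t\<in>topspace X. \<epsilon> \<le> \<bar>f t\<bar> \<longrightarrow> \<bar>?u t\<bar> \<le> 1 - \<eta>"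
      using small_eta[OF cpt ps s1 f f0 e] by blast
    define cl where "cl t = max (-\<epsilon>) (min \<epsilon> (f t))" for t
    define fe where "fe t = f t - cl t" for t
    have clCK: "cl \<in> CK X"
    proof (rule CK_I)
      show "continuous_map X euclideanreal cl" unfolding cl_def[abs_def]
        by (intro continuous_map_real_max continuous_map_real_min continuous_map_const[THEN iffD2] CK_cont[OF f]) auto
      fix t assume "t \<notin> topspace X"
      then have "f t = 0" using CK_out[OF f] by blast
      then show "cl t = 0" using e by (simp add: cl_def)
    qed
    have feCK: "fe \<in> CK X" unfolding fe_def[abs_def] by (rule CK_diff[OF f clCK])
    have clb: "\<bar>cl t\<bar> \<le> \<epsilon>" for t using e by (simp add: cl_def)
    have supcl: "supn X cl \<le> \<epsilon>" by (rule supn_le) (use e clb in auto)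
    have fe0: "fe t = 0" if "\<bar>f t\<bar> \<le> \<epsilon>" for t using that by (simp add: fe_def cl_def abs_le_iff)
    have feb: "\<bar>fe t\<bar> \<le> \<bar>f t\<bar>" for t using e by (simp add: fe_def cl_def abs_if)
    define \<kappa> where "\<kappa> = \<eta> / (M + 1)"
    have \<kappa>0: "\<kappa> > 0" unfolding \<kappa>_def using \<eta>(1) M0 by simp
    have \<kappa>M: "\<kappa> * M \<le> \<eta>"
    proof -
      have "\<eta> * M \<le> \<eta> * (M + 1)" using \<eta>(1) by simp
      then have "\<eta> * M / (M + 1) \<le> \<eta>" using M0 by (simp add: pos_divide_le_eq)
      then show ?thesis unfolding \<kappa>_def by simp
    qed
    have side: "\<sigma> * \<kappa> * \<psi> fe \<le> 0" if \<sigma>: "\<bar>\<sigma>\<bar> = 1" for \<sigma> :: real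
    proof -
      define w where "w t = ?u t + (\<sigma> * \<kappa>) * fe t" for t
      have wCK: "w \<in> CK X" unfolding w_def[abs_def] by (intro CK_add uCK CK_cmul feCK)
      have "supn X w \<le> 1"
      proof (rule supn_le)
        fix t assume t: "t \<in> topspace X"
        show "\<bar>w t\<bar> \<le> 1"
        proof (cases "\<bar>f t\<bar> \<le> \<epsilon>")
          case True then show ?thesis using ule[of t] fe0 by (simp add: w_def)
        next
          case False
          then have "\<bar>?u t\<bar> \<le> 1 - \<eta>" using \<eta>(2) t by auto
          moreover have "\<bar>(\<sigma> * \<kappa>) * fe t\<bar> \<le> \<kappa> * M"
          proof -
            have "\<bar>(\<sigma> * \<kappa>) * fe t\<bar> = \<kappa> * \<bar>fe t\<bar>" using \<sigma> \<kappa>0 by (simp add: abs_mult)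
            also have "\<dots> \<le> \<kappa> * M" using feb[of t] fM[OF t] \<kappa>0 by (simp add: mult_left_mono)
            finally show ?thesis .
          qed
          ultimately have "\<bar>?u t\<bar> + \<bar>(\<sigma> * \<kappa>) * fe t\<bar> \<le> 1" using \<kappa>M by linarith
          then show ?thesis unfolding w_def using abs_triangle_ineq order_trans by blast
        qed
      qed simp
      have "\<bar>\<psi> w\<bar> \<le> A * supn X w" unfolding A_def by (rule CK_dual_norm_bound[OF cpt dual wCK])
      also have "\<dots> \<le> A * 1" using \<open>supn X w \<le> 1\<close> A0 by (rule mult_left_mono)
      finally have "\<psi> w \<le> A" by simp
      moreover have "\<psi> w = A + (\<sigma> * \<kappa>) * \<psi> fe"
        unfolding w_def[abs_def] using CK_dual_add[OF dual uCK CK_cmul[OF feCK]] CK_dual_cmul[OF dual feCK] us A_def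
        by simp
      ultimately show ?thesis by simp
    qed
    have "1 * \<kappa> * \<psi> fe \<le> 0" by (rule side) simp
    moreover have "(-1) * \<kappa> * \<psi> fe \<le> 0" by (rule side) simp
    ultimately have "\<kappa> * \<psi> fe = 0" by simp
    then have pfe: "\<psi> fe = 0" using \<kappa>0 by simp
    have "f = (\<lambda>t. fe t + cl t)" by (simp add: fe_def)
    then have "\<psi> f = \<psi> fe + \<psi> cl" using CK_dual_add[OF dual feCK clCK] by simp
    then have "\<psi> f = \<psi> cl" using pfe by simp
    also have "\<bar>\<psi> cl\<bar> \<le> A * supn X cl" unfolding A_def by (rule CK_dual_norm_bound[OF cpt dual clCK])
    then have "\<bar>\<psi> cl\<bar> \<le> A * \<epsilon>" using supcl A0 mult_left_mono order_trans by blast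
    finally show ?thesis .
  qed
  show ?thesis
  proof (rule ccontr)
    assume ne: "\<psi> f \<noteq> 0"
    define \<epsilon> where "\<epsilon> = \<bar>\<psi> f\<bar> / (A + 1)"
    have e0: "\<epsilon> > 0" unfolding \<epsilon>_def using ne A0 by simp
    have "\<bar>\<psi> f\<bar> \<le> A * \<epsilon>" by (rule bound[OF e0])
    also have "A * \<epsilon> < (A + 1) * \<epsilon>" using e0 by simp
    also have "(A + 1) * \<epsilon> = \<bar>\<psi> f\<bar>" unfolding \<epsilon>_def using A0 by simp
    finally show False by simp
  qed
qed



lemma disjoint_nbhds:
  fixes p :: "'n::finite \<Rightarrow> 'a"
  assumes hd: "Hausdorff_space X" and pt: "\<And>i. p i \<in> topspace X" and inj: "inj p"
  shows "\<exists>V. \<forall>i. openin X (V i) \<and> p i \<in> V i \<and> (\<forall>j. j \<noteq> i \<longrightarrow> V i \<inter> V j = {})"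
proof -
  have "\<forall>ij. \<exists>UW. fst ij \<noteq> snd ij \<longrightarrow> openin X (fst UW) \<and> openin X (snd UW) \<and> p (fst ij) \<in> fst UW \<and> p (snd ij) \<in> snd UW \<and> disjnt (fst UW) (snd UW)"
  proof
    fix ij :: "'n \<times> 'n"
    show "\<exists>UW. fst ij \<noteq> snd ij \<longrightarrow> openin X (fst UW) \<and> openin X (snd UW) \<and> p (fst ij) \<in> fst UW \<and> p (snd ij) \<in> snd UW \<and> disjnt (fst UW) (snd UW)"
    proof (cases "fst ij = snd ij")
      case True then show ?thesis by blast
    next
      case False
      then have "p (fst ij) \<noteq> p (snd ij)" using inj by (simp add: inj_eq)
      then have "p (fst ij) \<in> topspace X \<and> p (snd ij) \<in> topspace X \<and> p (fst ij) \<noteq> p (snd ij)"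
        using pt by simp
      then have "\<exists>U W. openin X U \<and> openin X W \<and> p (fst ij) \<in> U \<and> p (snd ij) \<in> W \<and> disjnt U W"
        by (rule hd[unfolded Hausdorff_space_def, rule_format, of "p (fst ij)" "p (snd ij)"])
      then obtain U W where "openin X U" "openin X W" "p (fst ij) \<in> U" "p (snd ij) \<in> W" "disjnt U W"
        by (elim exE conjE)
      then show ?thesis by (intro exI[of _ "(U, W)"]) simp
    qed
  qed
  then obtain sep where sep: "\<forall>ij. fst ij \<noteq> snd ij \<longrightarrow> openin X (fst (sep ij)) \<and> openin X (snd (sep ij)) \<and> p (fst ij) \<in> fst (sep ij) \<and> p (snd ij) \<in> snd (sep ij) \<and> disjnt (fst (sep ij)) (snd (sep ij))"
    by (rule choice[THEN exE])
  define V where "V i = (\<Inter>j\<in>UNIV-{i}. fst (sep (i,j)) \<inter> snd (sep (j,i))) \<inter> topspace X" for i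
  show ?thesis
  proof (intro exI allI conjI impI)
    fix i
    show "openin X (V i)" unfolding V_def
    proof (rule openin_INT)
      fix j assume "j \<in> UNIV - {i}"
      then show "openin X (fst (sep (i, j)) \<inter> snd (sep (j, i)))" using sep by (auto intro: openin_Int)
    qed simp
    show "p i \<in> V i" unfolding V_def using sep pt by fastforce
    fix j assume ji: "j \<noteq> i"
    show "V i \<inter> V j = {}"
    proof (rule ccontr)
      assume "V i \<inter> V j \<noteq> {}"
      then obtain t where "t \<in> V i" "t \<in> V j" by blast
      then have "t \<in> fst (sep (i,j))" "t \<in> snd (sep (i,j))" using ji unfolding V_def by auto
      moreover have "disjnt (fst (sep (i,j))) (snd (sep (i,j)))" using sep ji by auto
      ultimately show False by (auto simp: disjnt_def)
    qed
  qed
qed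

lemma bwd:
  fixes X :: "'a topology"
  assumes cpt: "compact_space X" and hd: "Hausdorff_space X"
    and S: "S \<subseteq> gdelta_points X" "finite S" "card S = CARD('n::finite)"
  shows "\<exists>T :: real^'n \<Rightarrow> ('a \<Rightarrow> real). U_embedding X T"
proof -
  obtain p :: "'n \<Rightarrow> 'a" where bij: "bij_betw p UNIV S"
    using finite_same_card_bij[of "UNIV :: 'n set" S] S by auto
  have inj: "inj p" using bij bij_betw_imp_inj_on by blast
  have pS: "p i \<in> S" for i using bij bij_betwE by blast
  have pt: "p i \<in> topspace X" and pgd: "gdelta_in X {p i}" for i
    using pS[of i] S(1) by (auto simp: gdelta_points_def)
  obtain V where V: "\<And>i. openin X (V i)" "\<And>i. p i \<in> V i" "\<And>i j. j \<noteq> i \<Longrightarrow> V i \<inter> V j = {}"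
    using disjoint_nbhds[OF hd pt inj] by blast
  have "\<forall>i. \<exists>h. h \<in> CK X \<and> h (p i) = 1 \<and> (\<forall>t. 0 \<le> h t \<and> h t \<le> 1) \<and> (\<forall>t\<in>topspace X. t \<noteq> p i \<longrightarrow> h t < 1)
             \<and> (\<forall>t. t \<notin> V i \<longrightarrow> h t = 0)"
    using peak[OF cpt hd pt pgd V(1) V(2)] by blast
  then obtain h where h: "\<forall>i. h i \<in> CK X \<and> h i (p i) = 1 \<and> (\<forall>t. 0 \<le> h i t \<and> h i t \<le> 1) \<and> (\<forall>t\<in>topspace X. t \<noteq> p i \<longrightarrow> h i t < 1)
             \<and> (\<forall>t. t \<notin> V i \<longrightarrow> h i t = 0)"
    by (rule choice[THEN exE])
  have ps: "peak_sys X p h"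
    unfolding peak_sys_def
  proof (intro conjI allI impI)
    fix i j :: 'n and t assume ij: "i \<noteq> j"
    show "h i t = 0 \<or> h j t = 0"
    proof (cases "t \<in> V i")
      case True
      then have "t \<notin> V j" using V(3)[of i j] ij by blast
      then show ?thesis using h by blast
    next
      case False then show ?thesis using h by blast
    qed
  qed (use h pt in auto)
  let ?T = "Tmap h"
  have iso: "linf_CK_isometry X ?T" by (rule T_iso[OF cpt ps])
  have TCK: "?T x \<in> CK X" for x by (rule T_CK[OF ps])
  have Tp: "?T x (p i) = x$i" for x i by (rule T_at_p[OF ps])
  show ?thesis
  proof (intro exI[of _ ?T])
    show "U_embedding X ?T"
      unfolding U_embedding_def
    proof (intro conjI allI impI iso)
      fix g :: "real^'n \<Rightarrow> real" assume lg: "linear g"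
      define a where "a i = g (axis i 1)" for i
      define A where "A = (\<Sum>i\<in>UNIV. \<bar>a i\<bar>)"
      have ldn: "linf_dual_norm g = A" unfolding A_def a_def by (rule linf_dual_norm_eq[OF lg])
      have gexp: "g x = (\<Sum>i\<in>UNIV. a i * x$i)" for x
        unfolding lin_expand[OF lg, of x] a_def by (simp add: mult.commute)
      define \<phi> where "\<phi> f = (\<Sum>i\<in>UNIV. a i * f (p i))" for f :: "'a \<Rightarrow> real"
      have phib: "\<bar>\<phi> f\<bar> \<le> A * supn X f" if f: "f \<in> CK X" for f
      proof -
        have "\<bar>\<phi> f\<bar> \<le> (\<Sum>i\<in>UNIV. \<bar>a i * f (p i)\<bar>)" unfolding \<phi>_def by (rule sum_abs)
        also have "\<dots> \<le> (\<Sum>i\<in>UNIV. \<bar>a i\<bar> * supn X f)"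
        proof (rule sum_mono)
          fix i show "\<bar>a i * f (p i)\<bar> \<le> \<bar>a i\<bar> * supn X f"
            unfolding abs_mult by (rule mult_left_mono[OF supn_ge[OF cpt f pt]]) simp
        qed
        also have "\<dots> = A * supn X f" unfolding A_def by (simp add: sum_distrib_right)
        finally show ?thesis .
      qed
      have phid: "CK_dual X \<phi>"
        unfolding CK_dual_def
      proof (intro conjI ballI allI)
        fix f g assume "f \<in> CK X" "g \<in> CK X"
        show "\<phi> (\<lambda>x. f x + g x) = \<phi> f + \<phi> g" by (simp add: \<phi>_def distrib_left sum.distrib)
      next
        fix c f assume "f \<in> CK X"
        show "\<phi> (\<lambda>x. c * f x) = c * \<phi> f" by (simp add: \<phi>_def sum_distrib_left mult.left_commute)
      next
        show "\<exists>B. \<forall>f\<in>CK X. \<bar>\<phi> f\<bar> \<le> B * supn X f" using phib by blast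
      qed
      have phiT: "\<phi> (?T x) = g x" for x unfolding \<phi>_def Tp gexp ..
      define s :: "real^'n" where "s = (\<chi> i. sgn (a i))"
      have s1: "\<bar>s$i\<bar> \<le> 1" for i by (simp add: s_def abs_sgn_eq)
      have gs: "g s = A" unfolding gexp A_def s_def by (simp add: mul_sgn)
      have supu: "supn X (?T s) \<le> 1"
        using iso infnorm_le_cart[of s 1] s1 unfolding linf_CK_isometry_def by simp
      have phin: "CK_dual_norm X \<phi> = A"
      proof (rule antisym)
        show "CK_dual_norm X \<phi> \<le> A"
        proof (rule CK_dual_norm_le)
          fix f assume f: "f \<in> CK X" "supn X f \<le> 1"
          have "A * supn X f \<le> A * 1" by (rule mult_left_mono[OF f(2)]) (simp add: A_def)
          then show "\<bar>\<phi> f\<bar> \<le> A" using phib[OF f(1)] by simp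
        qed
        have "\<bar>\<phi> (?T s)\<bar> \<le> CK_dual_norm X \<phi>" by (rule CK_dual_norm_ge[OF phid TCK supu cpt])
        then show "A \<le> CK_dual_norm X \<phi>" using phiT gs by simp
      qed
      show "\<exists>\<phi>. CK_dual X \<phi> \<and> (\<forall>x. \<phi> (?T x) = g x) \<and> CK_dual_norm X \<phi> = linf_dual_norm g \<and>
           (\<forall>\<psi>. CK_dual X \<psi> \<and> (\<forall>x. \<psi> (?T x) = g x) \<and> CK_dual_norm X \<psi> = linf_dual_norm g
                 \<longrightarrow> (\<forall>f\<in>CK X. \<psi> f = \<phi> f))"
      proof (intro exI[of _ \<phi>] conjI allI impI ballI)
        show "CK_dual X \<phi>" by (rule phid)
        show "\<phi> (?T x) = g x" for x by (rule phiT)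
        show "CK_dual_norm X \<phi> = linf_dual_norm g" using phin ldn by simp
        fix \<psi> f
        assume \<psi>: "CK_dual X \<psi> \<and> (\<forall>x. \<psi> (?T x) = g x) \<and> CK_dual_norm X \<psi> = linf_dual_norm g"
          and f: "f \<in> CK X"
        have pd: "CK_dual X \<psi>" and pT: "\<And>x. \<psi> (?T x) = g x" and pn: "CK_dual_norm X \<psi> = A"
          using \<psi> ldn by auto
        define c :: "real^'n" where "c = (\<chi> i. f (p i))"
        define f' where "f' t = f t - ?T c t" for t
        have f'CK: "f' \<in> CK X" unfolding f'_def[abs_def] by (rule CK_diff[OF f TCK])
        have f'0: "f' (p i) = 0" for i by (simp add: f'_def Tp c_def)
        have us: "\<psi> (?T s) = CK_dual_norm X \<psi>" using pT gs pn by simp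
        have k0: "\<psi> f' = 0" by (rule kill[OF cpt ps pd s1 us f'CK f'0])
        have "f = (\<lambda>t. f' t + ?T c t)" by (simp add: f'_def)
        then have "\<psi> f = \<psi> f' + \<psi> (?T c)" using CK_dual_add[OF pd f'CK TCK] by simp
        also have "\<dots> = g c" using k0 pT by simp
        also have "\<dots> = \<phi> f" unfolding gexp \<phi>_def c_def by simp
        finally show "\<psi> f = \<phi> f" .
      qed
    qed
  qed
qed

theorem proposition6p31:
  fixes X :: "'a topology"
  assumes "compact_space X" and "Hausdorff_space X"
  shows "(\<exists>T :: real^'n \<Rightarrow> ('a \<Rightarrow> real). U_embedding X T) \<longleftrightarrow>
         (\<exists>S. S \<subseteq> gdelta_points X \<and> finite S \<and> card S = CARD('n))"
proof
  assume "\<exists>T :: real^'n \<Rightarrow> ('a \<Rightarrow> real). U_embedding X T"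
  then obtain T :: "real^'n \<Rightarrow> ('a \<Rightarrow> real)" where "U_embedding X T" by blast
  then show "\<exists>S. S \<subseteq> gdelta_points X \<and> finite S \<and> card S = CARD('n)"
    by (rule fwd[OF assms])
next
  assume "\<exists>S. S \<subseteq> gdelta_points X \<and> finite S \<and> card S = CARD('n)"
  then obtain S where "S \<subseteq> gdelta_points X" "finite S" "card S = CARD('n)" by blast
  then show "\<exists>T :: real^'n \<Rightarrow> ('a \<Rightarrow> real). U_embedding X T"
    by (rule bwd[OF assms])
qed

end
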